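(* Let $T$ and $k$ be positive integers and let $p_1,\dots,p_k\in(0,1]$, with $q_i=1-p_i$. Consider blocks $i=1,\dots,k$, each of $T$ slots. In block $i$ the slot success indicators are i.i.d. Bernoulli$(p_i)$, and the blocks are independent. Block $0$ is a virtual block that is always successful; accordingly set $q_0=0$. Let $Z(i)$ indicate that block $i$ contains at least one success. On the event $Z(k)=1$, define the following quantities: - $\kappa\in\{1,\dots,k\}$, such that $k-\kappa$ is the most recent block before $k$ with $Z(k-\kappa)=1$; - $X_k$, the number of failure slots before the first success in block $k$. The peak age of information of the first successfully received input in block $k$ is $$\Delta^{\rm P}_{\kappa,k}=\kappa T+X_k+1.$$ Then $$\Theta^{\rm pa}_k:=\mathbb{E}[\Delta^{\rm P}_{\kappa,k}\mid Z(k)=1]=T\sum_{\kappa=1}^{k}\kappa(1-q_{k-\kappa}^T)\prod_{i=k-\kappa+1}^{k-1}q_i^T+\Big(\frac{q_k}{p_k}-\frac{Tq_k^T}{1-q_k^T}\Big)+1.$$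
   Context: Empty products equal $1$. The block-$0$ convention means block $0$ is always treated as a successful block, so $\kappa=k$ corresponds to no successful block among $1,\dots,k-1$. *)

theory Defs
  imports "HOL-Probability.Probability"
begin

text \<open>Outcome: omega (i,t) = True iff slot t (0 \<le> t < T) of block i (1 \<le> i \<le> k) is a success.
  All slots are independent, slot (i,t) is Bernoulli(p i).\<close>
definition block_pmf :: "nat \<Rightarrow> nat \<Rightarrow> (nat \<Rightarrow> real) \<Rightarrow> ((nat \<times> nat) \<Rightarrow> bool) pmf" where
  "block_pmf T k p = Pi_pmf ({1..k} \<times> {..<T}) False (\<lambda>(i, t). bernoulli_pmf (p i))"

definition Zblk :: "nat \<Rightarrow> ((nat \<times> nat) \<Rightarrow> bool) \<Rightarrow> nat \<Rightarrow> bool" where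
  "Zblk T \<omega> i \<longleftrightarrow> i = 0 \<or> (\<exists>t<T. \<omega> (i, t))"

definition kappa :: "nat \<Rightarrow> nat \<Rightarrow> ((nat \<times> nat) \<Rightarrow> bool) \<Rightarrow> nat" where
  "kappa T k \<omega> = (LEAST \<kappa>. 1 \<le> \<kappa> \<and> \<kappa> \<le> k \<and> Zblk T \<omega> (k - \<kappa>))"

definition Xk :: "nat \<Rightarrow> ((nat \<times> nat) \<Rightarrow> bool) \<Rightarrow> nat" where
  "Xk k \<omega> = (LEAST t. \<omega> (k, t))"

definition peak_aoi :: "nat \<Rightarrow> nat \<Rightarrow> ((nat \<times> nat) \<Rightarrow> bool) \<Rightarrow> real" where
  "peak_aoi T k \<omega> = real (kappa T k \<omega>) * real T + real (Xk k \<omega>) + 1"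

definition qq :: "(nat \<Rightarrow> real) \<Rightarrow> nat \<Rightarrow> real" where
  "qq p i = (if i = 0 then 0 else 1 - p i)"

end

theory Submission
  imports Defs
begin

lemma cond_expect:
  fixes M :: "'a pmf" and f :: "'a \<Rightarrow> real"
  assumes fin: "finite (set_pmf M)" and nz: "measure_pmf.prob M A \<noteq> 0"
  shows "measure_pmf.expectation (cond_pmf M A) f
     = measure_pmf.expectation M (\<lambda>\<omega>. if \<omega> \<in> A then f \<omega> else 0) / measure_pmf.prob M A"
proof -
  have ne: "set_pmf M \<inter> A \<noteq> {}"
  proof
    assume "set_pmf M \<inter> A = {}"
    then have "measure_pmf.prob M A = measure_pmf.prob M (A \<inter> set_pmf M)"
      by (simp add: measure_Int_set_pmf)
    also have "\<dots> = 0" using \<open>set_pmf M \<inter> A = {}\<close> by (simp add: Int_commute)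
    finally show False using nz by simp
  qed
  have "measure_pmf.expectation (cond_pmf M A) f = (\<Sum>a\<in>set_pmf M. f a * pmf (cond_pmf M A) a)"
    by (rule integral_measure_pmf_real) (use fin ne in auto)
  also have "\<dots> = (\<Sum>a\<in>set_pmf M. (if a \<in> A then f a else 0) * pmf M a / measure_pmf.prob M A)"
    by (intro sum.cong refl) (simp add: pmf_cond[OF ne])
  also have "\<dots> = (\<Sum>a\<in>set_pmf M. (if a \<in> A then f a else 0) * pmf M a) / measure_pmf.prob M A"
    by (simp add: sum_divide_distrib)
  also have "(\<Sum>a\<in>set_pmf M. (if a \<in> A then f a else 0) * pmf M a) = measure_pmf.expectation M (\<lambda>\<omega>. if \<omega> \<in> A then f \<omega> else 0)"
    by (rule integral_measure_pmf_real[symmetric]) (use fin in auto)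
  finally show ?thesis .
qed

lemma prod_block_k:
  fixes c d :: real
  shows "x < T \<Longrightarrow> (\<Prod>t<T. if t < x then c else if t = x then d else 1) = c ^ x * d"
proof (induction T)
  case 0 then show ?case by simp
next
  case (Suc T)
  show ?case
  proof (cases "x < T")
    case True then show ?thesis using Suc by simp
  next
    case False then have "x = T" using Suc.prems by simp
    then show ?thesis by (simp add: prod.If_cases)
  qed
qed

lemma geom_x:
  fixes q :: real
  assumes "q < 1"
  shows "(\<Sum>x<T. real x * q ^ x * (1 - q)) = q * (1 - q ^ T) / (1 - q) - real T * q ^ T"
proof (induction T)
  case 0 then show ?case by simp
next
  case (Suc T)
  have "1 - q \<noteq> 0" using assms by simp
  then show ?case using Suc by (simp add: field_simps)
qed

lemma geom:
  fixes q :: real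
  shows "(\<Sum>x<T. q ^ x * (1 - q)) = 1 - q ^ T"
  by (induction T) (simp_all add: algebra_simps)

definition Bset :: "nat \<Rightarrow> nat \<Rightarrow> nat \<Rightarrow> nat \<times> nat \<Rightarrow> bool set" where
  "Bset k m x = (\<lambda>(i,t). if k - m \<le> i \<and> i < k then {False}
      else if i = k then (if t < x then {False} else if t = x then {True} else UNIV) else UNIV)"

lemma PiE_mem:
  assumes "m < k" "x < T" and out: "\<And>i t. (i,t) \<notin> {1..k} \<times> {..<T} \<Longrightarrow> \<not> \<omega> (i,t)"
  shows "\<omega> \<in> PiE_dflt ({1..k} \<times> {..<T}) False (Bset k m x) \<longleftrightarrow>
     (\<forall>i. k - m \<le> i \<and> i < k \<longrightarrow> (\<forall>t<T. \<not> \<omega> (i,t))) \<and> (\<forall>t<x. \<not> \<omega> (k,t)) \<and> \<omega> (k,x)"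
proof
  assume h: "\<omega> \<in> PiE_dflt ({1..k} \<times> {..<T}) False (Bset k m x)"
  have h1: "\<omega> (i,t) \<in> Bset k m x (i,t)" if "1 \<le> i" "i \<le> k" "t < T" for i t
    using h that unfolding PiE_dflt_def by auto
  show "(\<forall>i. k - m \<le> i \<and> i < k \<longrightarrow> (\<forall>t<T. \<not> \<omega> (i,t))) \<and> (\<forall>t<x. \<not> \<omega> (k,t)) \<and> \<omega> (k,x)"
  proof (intro conjI allI impI)
    fix i t assume "k - m \<le> i \<and> i < k" "t < T"
    moreover have "1 \<le> i" using \<open>k - m \<le> i \<and> i < k\<close> assms(1) by linarith
    ultimately show "\<not> \<omega> (i,t)" using h1[of i t] by (auto simp: Bset_def)
  next
    fix t assume "t < x"
    then show "\<not> \<omega> (k,t)" using h1[of k t] assms by (auto simp: Bset_def)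
  next
    show "\<omega> (k,x)" using h1[of k x] assms by (auto simp: Bset_def)
  qed
next
  assume h: "(\<forall>i. k - m \<le> i \<and> i < k \<longrightarrow> (\<forall>t<T. \<not> \<omega> (i,t))) \<and> (\<forall>t<x. \<not> \<omega> (k,t)) \<and> \<omega> (k,x)"
  show "\<omega> \<in> PiE_dflt ({1..k} \<times> {..<T}) False (Bset k m x)"
    unfolding PiE_dflt_def
  proof (intro CollectI allI conjI impI)
    fix z assume "z \<in> {1..k} \<times> {..<T}"
    then obtain i t where z: "z = (i,t)" "1 \<le> i" "i \<le> k" "t < T" by auto
    show "\<omega> z \<in> Bset k m x z" using h z by (auto simp: Bset_def)
  next
    fix z assume "z \<notin> {1..k} \<times> {..<T}"
    then show "\<omega> z = False" using out by (cases z) auto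
  qed
qed


lemma bern_meas:
  fixes r :: real assumes "0 \<le> r" "r \<le> 1"
  shows "measure_pmf.prob (bernoulli_pmf r) {False} = 1 - r"
    "measure_pmf.prob (bernoulli_pmf r) {True} = r"
    "measure_pmf.prob (bernoulli_pmf r) UNIV = 1"
  using assms by (simp_all add: measure_pmf_single)

lemma measure_P:
  assumes "m < k" "x < T" and pp: "\<forall>i\<in>{1..k}. 0 < p i \<and> p i \<le> 1"
  shows "measure_pmf.prob (block_pmf T k p) (PiE_dflt ({1..k}\<times>{..<T}) False (Bset k m x))
     = (\<Prod>i\<in>{k-m..<k}. (1 - p i)^T) * (1 - p k)^x * p k"
proof -
  define g where "g i t = measure_pmf.prob (bernoulli_pmf (p i)) (Bset k m x (i,t))" for i t
  have "measure_pmf.prob (block_pmf T k p) (PiE_dflt ({1..k}\<times>{..<T}) False (Bset k m x))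
      = (\<Prod>z\<in>{1..k}\<times>{..<T}. measure_pmf.prob ((\<lambda>(i, t). bernoulli_pmf (p i)) z) (Bset k m x z))"
    unfolding block_pmf_def by (rule measure_Pi_pmf_PiE_dflt) simp
  also have "\<dots> = (\<Prod>z\<in>{1..k}\<times>{..<T}. g (fst z) (snd z))"
    by (intro prod.cong refl) (auto simp: g_def)
  also have "\<dots> = (\<Prod>i\<in>{1..k}. \<Prod>t<T. g i t)"
    by (simp add: prod.cartesian_product case_prod_beta')
  also have "\<dots> = (\<Prod>i\<in>{1..k}. if i \<in> {k-m..<k} then (1 - p i)^T else if i = k then (1 - p k)^x * p k else 1)"
  proof (intro prod.cong refl)
    fix i assume i: "i \<in> {1..k}"
    then have p01: "0 \<le> p i" "p i \<le> 1" using pp less_imp_le by blast+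
    show "(\<Prod>t<T. g i t) = (if i \<in> {k-m..<k} then (1 - p i)^T else if i = k then (1 - p k)^x * p k else 1)"
    proof (cases "i \<in> {k-m..<k}")
      case True
      then have "g i t = 1 - p i" for t using bern_meas[OF p01] by (simp add: g_def Bset_def)
      then show ?thesis using True by simp
    next
      case False
      show ?thesis
      proof (cases "i = k")
        case True
        then have "g i t = (if t < x then 1 - p k else if t = x then p k else 1)" for t
          using bern_meas[OF p01] False by (simp add: g_def Bset_def)
        then show ?thesis using True False prod_block_k[OF assms(2)] by simp
      next
        case False2: False
        then have "g i t = 1" for t using bern_meas[OF p01] False by (auto simp add: g_def Bset_def)
        then show ?thesis using False False2 by auto
      qed
    qed
  qed
  also have "\<dots> = (1 - p k)^x * p k * (\<Prod>i\<in>{1..<k}. if i \<in> {k-m..<k} then (1 - p i)^T else 1)"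
  proof -
    have "{1..k} = insert k {1..<k}" using assms(1) by auto
    moreover have "(\<Prod>i\<in>{1..<k}. if i \<in> {k-m..<k} then (1 - p i)^T else if i = k then (1 - p k)^x * p k else 1)
       = (\<Prod>i\<in>{1..<k}. if i \<in> {k-m..<k} then (1 - p i)^T else 1)"
      by (intro prod.cong refl) auto
    ultimately show ?thesis by (simp add: prod.insert)
  qed
  also have "(\<Prod>i\<in>{1..<k}. if i \<in> {k-m..<k} then (1 - p i)^T else 1) = (\<Prod>i\<in>{1..<k} \<inter> {k-m..<k}. (1 - p i)^T)"
    by (rule prod.inter_restrict[symmetric]) simp
  also have "{1..<k} \<inter> {k-m..<k} = {k-m..<k}" using assms(1) by auto
  finally show ?thesis by simp
qed


lemma kappa_range:
  assumes "k > 0"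
  shows "1 \<le> kappa T k \<omega> \<and> kappa T k \<omega> \<le> k \<and> Zblk T \<omega> (k - kappa T k \<omega>)"
  unfolding kappa_def
  by (rule LeastI[of _ k]) (use assms in \<open>auto simp: Zblk_def\<close>)

lemma kappa_iff:
  assumes "k > 0" "1 \<le> j" "j \<le> k"
  shows "kappa T k \<omega> = j \<longleftrightarrow> Zblk T \<omega> (k - j) \<and> (\<forall>j'. 1 \<le> j' \<and> j' < j \<longrightarrow> \<not> Zblk T \<omega> (k - j'))"
proof
  assume h: "kappa T k \<omega> = j"
  have "\<not> Zblk T \<omega> (k - j')" if "1 \<le> j'" "j' < j" for j'
  proof
    assume "Zblk T \<omega> (k - j')"
    then have "1 \<le> j' \<and> j' \<le> k \<and> Zblk T \<omega> (k - j')" using that assms by auto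
    then have "kappa T k \<omega> \<le> j'" unfolding kappa_def by (rule Least_le)
    then show False using h that by simp
  qed
  then show "Zblk T \<omega> (k - j) \<and> (\<forall>j'. 1 \<le> j' \<and> j' < j \<longrightarrow> \<not> Zblk T \<omega> (k - j'))"
    using kappa_range[OF assms(1), of T \<omega>] h by auto
next
  assume h: "Zblk T \<omega> (k - j) \<and> (\<forall>j'. 1 \<le> j' \<and> j' < j \<longrightarrow> \<not> Zblk T \<omega> (k - j'))"
  show "kappa T k \<omega> = j" unfolding kappa_def
  proof (rule Least_equality)
    show "1 \<le> j \<and> j \<le> k \<and> Zblk T \<omega> (k - j)" using h assms by auto
  next
    fix y assume "1 \<le> y \<and> y \<le> k \<and> Zblk T \<omega> (k - y)"
    then show "j \<le> y" using h by (meson not_le)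
  qed
qed

lemma Xk_iff:
  assumes "x < T"
  shows "(\<forall>t<x. \<not> \<omega> (k,t)) \<and> \<omega> (k,x) \<Longrightarrow> Xk k \<omega> = x"
  unfolding Xk_def
  by (rule Least_equality) (auto simp: not_le[symmetric])

lemma Xk_prop:
  assumes "k > 0" "Zblk T \<omega> k"
  shows "Xk k \<omega> < T" "\<omega> (k, Xk k \<omega>)" "\<forall>t<Xk k \<omega>. \<not> \<omega> (k,t)"
proof -
  obtain t where t: "t < T" "\<omega> (k,t)" using assms by (auto simp: Zblk_def)
  show "\<omega> (k, Xk k \<omega>)" unfolding Xk_def by (rule LeastI[of _ t]) (rule t)
  have "Xk k \<omega> \<le> t" unfolding Xk_def by (rule Least_le) (rule t)
  then show "Xk k \<omega> < T" using t by simp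
  show "\<forall>t<Xk k \<omega>. \<not> \<omega> (k,t)" unfolding Xk_def using not_less_Least by blast
qed


definition Ev :: "nat \<Rightarrow> nat \<Rightarrow> nat \<Rightarrow> nat \<Rightarrow> ((nat \<times> nat) \<Rightarrow> bool) set" where
  "Ev T k j x = {\<omega>. Zblk T \<omega> k \<and> kappa T k \<omega> = j \<and> Xk k \<omega> = x}"

definition PP :: "nat \<Rightarrow> nat \<Rightarrow> nat \<Rightarrow> nat \<Rightarrow> ((nat \<times> nat) \<Rightarrow> bool) set" where
  "PP T k m x = PiE_dflt ({1..k}\<times>{..<T}) False (Bset k m x)"

lemma Ev_char:
  assumes k: "k > 0" and j: "1 \<le> j" "j \<le> k" and x: "x < T"
    and out: "\<And>i t. (i,t) \<notin> {1..k} \<times> {..<T} \<Longrightarrow> \<not> \<omega> (i,t)"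
  shows "\<omega> \<in> Ev T k j x \<longleftrightarrow> \<omega> \<in> PP T k (j-1) x \<and> (j < k \<longrightarrow> \<omega> \<notin> PP T k j x)"
proof -
  define fail where "fail i \<longleftrightarrow> (\<forall>t<T. \<not> \<omega> (i,t))" for i
  have a: "Zblk T \<omega> k \<and> Xk k \<omega> = x \<longleftrightarrow> (\<forall>t<x. \<not> \<omega> (k,t)) \<and> \<omega> (k,x)"
  proof
    assume h: "Zblk T \<omega> k \<and> Xk k \<omega> = x"
    then show "(\<forall>t<x. \<not> \<omega> (k,t)) \<and> \<omega> (k,x)" using Xk_prop[OF k, of T \<omega>] by simp
  next
    assume h: "(\<forall>t<x. \<not> \<omega> (k,t)) \<and> \<omega> (k,x)"
    have "Zblk T \<omega> k" using h x unfolding Zblk_def by blast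
    then show "Zblk T \<omega> k \<and> Xk k \<omega> = x" using Xk_iff[OF x h] by simp
  qed
  have b: "(\<forall>j'. 1 \<le> j' \<and> j' < j \<longrightarrow> \<not> Zblk T \<omega> (k - j')) \<longleftrightarrow> (\<forall>i. k - (j-1) \<le> i \<and> i < k \<longrightarrow> fail i)"
  proof
    assume h: "\<forall>j'. 1 \<le> j' \<and> j' < j \<longrightarrow> \<not> Zblk T \<omega> (k - j')"
    show "\<forall>i. k - (j-1) \<le> i \<and> i < k \<longrightarrow> fail i"
    proof (intro allI impI)
      fix i assume i: "k - (j-1) \<le> i \<and> i < k"
      have "\<not> Zblk T \<omega> (k - (k - i))" using h i j by (intro h[rule_format]) auto
      then show "fail i" using i by (simp add: Zblk_def fail_def)
    qed
  next
    assume h: "\<forall>i. k - (j-1) \<le> i \<and> i < k \<longrightarrow> fail i"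
    show "\<forall>j'. 1 \<le> j' \<and> j' < j \<longrightarrow> \<not> Zblk T \<omega> (k - j')"
    proof (intro allI impI)
      fix j' assume j': "1 \<le> j' \<and> j' < j"
      have "fail (k - j')" using j' j by (intro h[rule_format]) auto
      moreover have "k - j' \<noteq> 0" using j' j by auto
      ultimately show "\<not> Zblk T \<omega> (k - j')" by (simp add: Zblk_def fail_def)
    qed
  qed
  have c: "Zblk T \<omega> (k - j) \<longleftrightarrow> j = k \<or> \<not> fail (k - j)"
    using j by (auto simp: Zblk_def fail_def)
  have d: "(\<forall>i. k - j \<le> i \<and> i < k \<longrightarrow> fail i) \<longleftrightarrow> fail (k - j) \<and> (\<forall>i. k - (j-1) \<le> i \<and> i < k \<longrightarrow> fail i)"
    if "j < k"
  proof -
    have "k - j \<le> i \<longleftrightarrow> i = k - j \<or> k - (j-1) \<le> i" for i using that j by auto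
    moreover have "k - j < k" using that j by auto
    ultimately show ?thesis by metis
  qed
  have p1: "\<omega> \<in> PP T k (j-1) x \<longleftrightarrow> (\<forall>i. k - (j-1) \<le> i \<and> i < k \<longrightarrow> fail i) \<and> (\<forall>t<x. \<not> \<omega> (k,t)) \<and> \<omega> (k,x)"
    unfolding PP_def fail_def using PiE_mem[of "j-1" k x T \<omega>] j k x out by auto
  have p2: "\<omega> \<in> PP T k j x \<longleftrightarrow> (\<forall>i. k - j \<le> i \<and> i < k \<longrightarrow> fail i) \<and> (\<forall>t<x. \<not> \<omega> (k,t)) \<and> \<omega> (k,x)"
    if "j < k"
    unfolding PP_def fail_def using PiE_mem[of j k x T \<omega>] that x out by auto
  have e: "\<omega> \<in> Ev T k j x \<longleftrightarrow> ((\<forall>t<x. \<not> \<omega> (k,t)) \<and> \<omega> (k,x)) \<and> (j = k \<or> \<not> fail (k - j)) \<and> (\<forall>i. k - (j-1) \<le> i \<and> i < k \<longrightarrow> fail i)"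
    unfolding Ev_def using a b c kappa_iff[OF k j, of T \<omega>] by blast
  show ?thesis
  proof (cases "j < k")
    case True
    show ?thesis using e p1 p2[OF True] d[OF True] True by blast
  next
    case False
    then have "j = k" using j by simp
    then show ?thesis using e p1 by auto
  qed
qed


lemma set_block_out:
  assumes "\<omega> \<in> set_pmf (block_pmf T k p)" "(i,t) \<notin> {1..k} \<times> {..<T}"
  shows "\<not> \<omega> (i,t)"
proof -
  have "set_pmf (block_pmf T k p) \<subseteq> PiE_dflt ({1..k} \<times> {..<T}) False (set_pmf \<circ> (\<lambda>(i, t). bernoulli_pmf (p i)))"
    unfolding block_pmf_def by (rule set_Pi_pmf_subset') simp
  then show ?thesis using assms unfolding PiE_dflt_def by blast
qed

lemma finite_set_block: "finite (set_pmf (block_pmf T k p))"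
proof -
  have "set_pmf (block_pmf T k p) \<subseteq> PiE_dflt ({1..k} \<times> {..<T}) False (set_pmf \<circ> (\<lambda>(i, t). bernoulli_pmf (p i)))"
    unfolding block_pmf_def by (rule set_Pi_pmf_subset') simp
  moreover have "finite (PiE_dflt ({1..k} \<times> {..<T}) False (set_pmf \<circ> (\<lambda>(i, t). bernoulli_pmf (p i))))"
    by (rule finite_PiE_dflt) auto
  ultimately show ?thesis by (rule finite_subset)
qed

lemma Bset_mono: "Bset k j x z \<subseteq> Bset k (j-1) x z"
proof (cases z)
  case (Pair i t)
  show ?thesis
  proof (cases "k - j \<le> i \<and> i < k")
    case True
    then show ?thesis unfolding Pair Bset_def by auto
  next
    case False
    then have "\<not> (k - (j-1) \<le> i \<and> i < k)" by auto
    then show ?thesis using False unfolding Pair Bset_def by auto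
  qed
qed

lemma PP_mono: "PP T k j x \<subseteq> PP T k (j-1) x"
  unfolding PP_def PiE_dflt_def using Bset_mono by blast

lemma measure_Ev:
  assumes k: "k > 0" and j: "1 \<le> j" "j \<le> k" and x: "x < T"
    and pp: "\<forall>i\<in>{1..k}. 0 < p i \<and> p i \<le> 1"
  shows "measure_pmf.prob (block_pmf T k p) (Ev T k j x)
    = (1 - qq p (k - j) ^ T) * (\<Prod>i=k-j+1..k-1. qq p i ^ T) * ((1 - p k)^x * p k)"
proof -
  let ?M = "block_pmf T k p"
  define F where "F m = (\<Prod>i\<in>{k-m..<k}. (1 - p i)^T)" for m
  have T0: "T > 0" using x by simp
  have F1: "(\<Prod>i=k-j+1..k-1. qq p i ^ T) = F (j-1)"
  proof -
    have "{k-j+1..k-1} = {k-(j-1)..<k}" using j k by auto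
    moreover have "qq p i = 1 - p i" if "i \<in> {k-(j-1)..<k}" for i using that j by (auto simp: qq_def)
    ultimately show ?thesis unfolding F_def by simp
  qed
  have mP: "measure_pmf.prob ?M (PP T k m x) = F m * ((1 - p k)^x * p k)" if "m < k" for m
    unfolding PP_def F_def using measure_P[OF that x pp] by simp
  show ?thesis
  proof (cases "j < k")
    case True
    have eq: "Ev T k j x \<inter> set_pmf ?M = (PP T k (j-1) x - PP T k j x) \<inter> set_pmf ?M"
    proof (intro set_eqI)
      fix \<omega>
      show "\<omega> \<in> Ev T k j x \<inter> set_pmf ?M \<longleftrightarrow> \<omega> \<in> (PP T k (j-1) x - PP T k j x) \<inter> set_pmf ?M"
      proof (cases "\<omega> \<in> set_pmf ?M")
        case True
        have "\<omega> \<in> Ev T k j x \<longleftrightarrow> \<omega> \<in> PP T k (j-1) x \<and> (j < k \<longrightarrow> \<omega> \<notin> PP T k j x)"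
          by (rule Ev_char[OF k j x]) (rule set_block_out[OF True])
        then show ?thesis using True \<open>j < k\<close> by simp
      qed simp
    qed
    have "measure_pmf.prob ?M (Ev T k j x) = measure_pmf.prob ?M (PP T k (j-1) x - PP T k j x)"
      by (metis eq measure_Int_set_pmf)
    also have "\<dots> = measure_pmf.prob ?M (PP T k (j-1) x) - measure_pmf.prob ?M (PP T k j x)"
      using PP_mono[of T k j x] by (intro measure_pmf.finite_measure_Diff) simp_all
    also have "\<dots> = F (j-1) * ((1 - p k)^x * p k) - F j * ((1 - p k)^x * p k)"
      using mP[of "j-1"] mP[of j] True by simp
    also have "F j = (1 - p (k-j))^T * F (j-1)"
    proof -
      have "{k-j..<k} = insert (k-j) {k-(j-1)..<k}" using j True by auto
      moreover have "k - j \<notin> {k-(j-1)..<k}" using j True by auto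
      ultimately show ?thesis unfolding F_def by simp
    qed
    finally have m: "measure_pmf.prob ?M (Ev T k j x) = F (j-1) * ((1 - p k)^x * p k) - (1 - p (k-j))^T * F (j-1) * ((1 - p k)^x * p k)" .
    have qe: "qq p (k - j) = 1 - p (k - j)" using True by (simp add: qq_def)
    show ?thesis unfolding F1 m qe by (simp add: algebra_simps)
  next
    case False
    then have jk: "j = k" using j by simp
    have eq: "Ev T k j x \<inter> set_pmf ?M = PP T k (j-1) x \<inter> set_pmf ?M"
    proof (intro set_eqI)
      fix \<omega>
      show "\<omega> \<in> Ev T k j x \<inter> set_pmf ?M \<longleftrightarrow> \<omega> \<in> PP T k (j-1) x \<inter> set_pmf ?M"
      proof (cases "\<omega> \<in> set_pmf ?M")
        case True
        have "\<omega> \<in> Ev T k j x \<longleftrightarrow> \<omega> \<in> PP T k (j-1) x \<and> (j < k \<longrightarrow> \<omega> \<notin> PP T k j x)"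
          by (rule Ev_char[OF k j x]) (rule set_block_out[OF True])
        then show ?thesis using True jk by simp
      qed simp
    qed
    have "measure_pmf.prob ?M (Ev T k j x) = measure_pmf.prob ?M (PP T k (j-1) x)"
      by (metis eq measure_Int_set_pmf)
    also have "\<dots> = F (j-1) * ((1 - p k)^x * p k)" using mP[of "j-1"] jk k by simp
    finally show ?thesis using F1 jk T0 by (simp add: qq_def)
  qed
qed


lemma pointwise:
  assumes k: "k > 0"
  shows "(if Zblk T \<omega> k then c (kappa T k \<omega>) (Xk k \<omega>) else 0)
    = (\<Sum>j\<in>{1..k}. \<Sum>x<T. (c j x :: real) * indicator (Ev T k j x) \<omega>)"
proof (cases "Zblk T \<omega> k")
  case False
  then have "indicator (Ev T k j x) \<omega> = (0::real)" for j x by (simp add: Ev_def)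
  then show ?thesis using False by simp
next
  case True
  define J where "J = kappa T k \<omega>"
  define X where "X = Xk k \<omega>"
  have J: "J \<in> {1..k}" using kappa_range[OF k, of T \<omega>] J_def by simp
  have X: "X \<in> {..<T}" using Xk_prop[OF k True] X_def by simp
  have ind: "c j x * indicator (Ev T k j x) \<omega> = (if j = J then (if x = X then c j x else 0) else 0)" for j x
    using True by (simp add: Ev_def J_def X_def indicator_def eq_commute)
  have "(\<Sum>j\<in>{1..k}. \<Sum>x<T. c j x * indicator (Ev T k j x) \<omega>)
      = (\<Sum>j\<in>{1..k}. if j = J then (\<Sum>x<T. if x = X then c j x else 0) else 0)"
    unfolding ind by (intro sum.cong refl) simp
  also have "\<dots> = (\<Sum>x<T. if x = X then c J x else 0)"
    using J by (simp add: sum.delta)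
  also have "\<dots> = c J X" using X by (simp add: sum.delta)
  finally show ?thesis using True J_def X_def by simp
qed

lemma expect_decomp:
  assumes k: "k > 0"
  shows "measure_pmf.expectation (block_pmf T k p) (\<lambda>\<omega>. if Zblk T \<omega> k then c (kappa T k \<omega>) (Xk k \<omega>) else 0)
    = (\<Sum>j\<in>{1..k}. \<Sum>x<T. (c j x :: real) * measure_pmf.prob (block_pmf T k p) (Ev T k j x))"
proof -
  let ?M = "block_pmf T k p"
  have int: "integrable (measure_pmf ?M) f" for f :: "_ \<Rightarrow> real"
    by (rule integrable_measure_pmf_finite[OF finite_set_block])
  have "measure_pmf.expectation ?M (\<lambda>\<omega>. if Zblk T \<omega> k then c (kappa T k \<omega>) (Xk k \<omega>) else 0)
      = measure_pmf.expectation ?M (\<lambda>\<omega>. \<Sum>j\<in>{1..k}. \<Sum>x<T. c j x * indicator (Ev T k j x) \<omega>)"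
    by (intro Bochner_Integration.integral_cong refl) (rule pointwise[OF k])
  also have "\<dots> = (\<Sum>j\<in>{1..k}. measure_pmf.expectation ?M (\<lambda>\<omega>. \<Sum>x<T. c j x * indicator (Ev T k j x) \<omega>))"
    by (rule Bochner_Integration.integral_sum) (rule int)
  also have "\<dots> = (\<Sum>j\<in>{1..k}. \<Sum>x<T. measure_pmf.expectation ?M (\<lambda>\<omega>. c j x * indicator (Ev T k j x) \<omega>))"
    by (intro sum.cong refl Bochner_Integration.integral_sum int)
  also have "\<dots> = (\<Sum>j\<in>{1..k}. \<Sum>x<T. c j x * measure_pmf.prob ?M (Ev T k j x))"
    by (intro sum.cong refl) simp
  finally show ?thesis .
qed


lemma pi_sum:
  assumes k: "k > 0" and T: "T > 0"
  shows "(\<Sum>j\<in>{1..k}. (1 - qq p (k - j) ^ T) * (\<Prod>i=k-j+1..k-1. qq p i ^ T)) = 1"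
proof -
  define G where "G j = (\<Prod>i=k-j..k-1. qq p i ^ T)" for j
  have step: "(1 - qq p (k - j) ^ T) * (\<Prod>i=k-j+1..k-1. qq p i ^ T) = -(G j - G (j - 1))"
    if "j \<in> {Suc 0..k}" for j
  proof -
    have "{k-j..k-1} = insert (k-j) {k-j+1..k-1}" using that k by auto
    then have "G j = qq p (k-j) ^ T * (\<Prod>i=k-j+1..k-1. qq p i ^ T)" unfolding G_def by simp
    moreover have "G (j-1) = (\<Prod>i=k-j+1..k-1. qq p i ^ T)" unfolding G_def using that
      by (intro prod.cong refl) auto
    ultimately show ?thesis by (simp add: algebra_simps)
  qed
  have "(\<Sum>j\<in>{1..k}. (1 - qq p (k - j) ^ T) * (\<Prod>i=k-j+1..k-1. qq p i ^ T)) = (\<Sum>j\<in>{Suc 0..k}. -(G j - G (j - 1)))"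
    using step by (intro sum.cong) auto
  also have "\<dots> = -(\<Sum>j\<in>{Suc 0..k}. G j - G (j - 1))" by (simp add: sum_negf[symmetric])
  also have "\<dots> = -(G k - G 0)" using sum_telescope''[of 0 k G] by simp
  also have "G 0 = 1" unfolding G_def using k by simp
  also have "G k = 0"
  proof -
    have "0 \<in> {k-k..k-1}" by simp
    moreover have "qq p 0 ^ T = 0" using T by (simp add: qq_def)
    ultimately show ?thesis unfolding G_def by (metis finite_atLeastAtMost prod_zero)
  qed
  finally show ?thesis by simp
qed


theorem theorem3:
  fixes T k :: nat and p :: "nat \<Rightarrow> real"
  assumes "T > 0" and "k > 0" and "\<forall>i\<in>{1..k}. 0 < p i \<and> p i \<le> 1"
  shows "measure_pmf.expectation (cond_pmf (block_pmf T k p) {\<omega>. Zblk T \<omega> k}) (peak_aoi T k)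
    = real T * (\<Sum>\<kappa>=1..k. real \<kappa> * (1 - qq p (k - \<kappa>) ^ T) * (\<Prod>i=k-\<kappa>+1..k-1. qq p i ^ T))
      + (qq p k / p k - real T * qq p k ^ T / (1 - qq p k ^ T)) + 1"
proof -
  let ?M = "block_pmf T k p"
  let ?A = "{\<omega>. Zblk T \<omega> k}"
  define q where "q = qq p k"
  define pi where "pi j = (1 - qq p (k - j) ^ T) * (\<Prod>i=k-j+1..k-1. qq p i ^ T)" for j
  have pk: "0 < p k" "p k \<le> 1" using assms(2,3) by auto
  have q: "q = 1 - p k" "0 \<le> q" "q < 1" using pk assms(2) by (auto simp: q_def qq_def)
  have qT: "q ^ T < 1" using q assms(1) by (simp add: power_less_one_iff)
  have pis: "(\<Sum>j\<in>{1..k}. pi j) = 1" unfolding pi_def by (rule pi_sum[OF assms(2,1)])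
  have mEv: "measure_pmf.prob ?M (Ev T k j x) = pi j * (q ^ x * (1 - q))" if "j \<in> {1..k}" "x \<in> {..<T}" for j x
    using measure_Ev[OF assms(2) _ _ _ assms(3), of j x] that q unfolding pi_def by simp
  have gen: "measure_pmf.expectation ?M (\<lambda>\<omega>. if Zblk T \<omega> k then c (kappa T k \<omega>) (Xk k \<omega>) else 0)
     = (\<Sum>j\<in>{1..k}. \<Sum>x<T. c j x * (pi j * (q ^ x * (1 - q))))" for c
    unfolding expect_decomp[OF assms(2)] using mEv by (intro sum.cong refl) simp
  have PA: "measure_pmf.prob ?M ?A = 1 - q ^ T"
  proof -
    have "measure_pmf.prob ?M ?A = measure_pmf.expectation ?M (\<lambda>\<omega>. if Zblk T \<omega> k then (\<lambda>j x. 1::real) (kappa T k \<omega>) (Xk k \<omega>) else 0)"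
    proof -
      have "(\<lambda>\<omega>. if Zblk T \<omega> k then (\<lambda>j x. 1::real) (kappa T k \<omega>) (Xk k \<omega>) else 0) = indicator ?A"
        by (auto simp: indicator_def)
      then show ?thesis by simp
    qed
    also have "\<dots> = (\<Sum>j\<in>{1..k}. pi j * (\<Sum>x<T. q ^ x * (1 - q)))"
      using gen[of "\<lambda>j x. 1"] by (simp add: sum_distrib_left)
    also have "\<dots> = 1 - q ^ T" unfolding geom sum_distrib_right[symmetric] pis using geom[of q T] by (simp add: sum_distrib_right)
    finally show ?thesis .
  qed
  have S2: "(\<Sum>x<T. (real x + 1) * (q ^ x * (1 - q))) = q * (1 - q ^ T) / (1 - q) - real T * q ^ T + (1 - q ^ T)"
  proof -
    have "(\<Sum>x<T. (real x + 1) * (q ^ x * (1 - q))) = (\<Sum>x<T. real x * q ^ x * (1 - q)) + (\<Sum>x<T. q ^ x * (1 - q))"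
      by (subst sum.distrib[symmetric]) (intro sum.cong refl, simp add: algebra_simps)
    then show ?thesis unfolding geom_x[OF q(3)] geom by simp
  qed
  have num: "measure_pmf.expectation ?M (\<lambda>\<omega>. if \<omega> \<in> ?A then peak_aoi T k \<omega> else 0)
     = real T * (\<Sum>j\<in>{1..k}. real j * pi j) * (1 - q ^ T) + (q * (1 - q ^ T) / (1 - q) - real T * q ^ T + (1 - q ^ T))"
  proof -
    have "measure_pmf.expectation ?M (\<lambda>\<omega>. if \<omega> \<in> ?A then peak_aoi T k \<omega> else 0)
       = measure_pmf.expectation ?M (\<lambda>\<omega>. if Zblk T \<omega> k then (\<lambda>j x. real j * real T + real x + 1) (kappa T k \<omega>) (Xk k \<omega>) else 0)"
      unfolding peak_aoi_def by simp
    also have "\<dots> = (\<Sum>j\<in>{1..k}. \<Sum>x<T. (real j * real T + real x + 1) * (pi j * (q ^ x * (1 - q))))"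
      by (rule gen)
    also have "\<dots> = (\<Sum>j\<in>{1..k}. pi j * (real j * real T * (\<Sum>x<T. q ^ x * (1 - q)) + (\<Sum>x<T. (real x + 1) * (q ^ x * (1 - q)))))"
      unfolding distrib_left sum_distrib_left sum.distrib[symmetric] by (intro sum.cong refl) (simp add: algebra_simps)
    also have "\<dots> = (\<Sum>j\<in>{1..k}. real j * pi j) * real T * (1 - q ^ T) + (\<Sum>j\<in>{1..k}. pi j) * (\<Sum>x<T. (real x + 1) * (q ^ x * (1 - q)))"
    proof -
      define S where "S = (\<Sum>x<T. (real x + 1) * (q ^ x * (1 - q)))"
      show ?thesis unfolding geom S_def[symmetric]
        by (simp add: sum_distrib_right sum_distrib_left sum.distrib sum_subtractf algebra_simps)
    qed
    finally show ?thesis unfolding pis S2 by (simp add: algebra_simps)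
  qed
  have "measure_pmf.expectation (cond_pmf ?M ?A) (peak_aoi T k)
     = measure_pmf.expectation ?M (\<lambda>\<omega>. if \<omega> \<in> ?A then peak_aoi T k \<omega> else 0) / measure_pmf.prob ?M ?A"
    by (rule cond_expect[OF finite_set_block]) (use PA qT in simp)
  also have "\<dots> = real T * (\<Sum>j\<in>{1..k}. real j * pi j) + (q / p k - real T * q ^ T / (1 - q ^ T)) + 1"
  proof -
    have ne: "1 - q ^ T \<noteq> 0" using qT by simp
    have "1 - q = p k" using q by simp
    then show ?thesis unfolding num PA using ne by (simp add: field_simps)
  qed
  finally show ?thesis unfolding pi_def q_def by (simp add: mult.assoc)
qed

end
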